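(* Let $X$ be a graph with Hamiltonian $M\in\{A,L,Q\}$, let $s\in\mathbb{R}\setminus\{0\}$, and suppose the $s$-pair states $\mathbf u=\mathbf e_a+s\mathbf e_b$ and $\boldsymbol\mu=\mathbf e_\alpha+s\mathbf e_\beta$ are strongly cospectral with respect to $M$. If $s\neq1$, then every automorphism of $X$ that fixes $a$ and fixes $b$ also fixes $\alpha$ and fixes $\beta$. If $s=1$, then every automorphism of $X$ that fixes the set $\{a,b\}$ also fixes the set $\{\alpha,\beta\}$.
   Context: $A$, $L=D-A$, $Q=D+A$ are the adjacency, Laplacian, signless Laplacian matrices. An $s$-pair state is $\mathbf e_a+s\mathbf e_b$ with $a\neq b$ vertices. For $M=\sum_\lambda\lambda E_\lambda$ (orthogonal spectral projections), real vectors $\mathbf u,\boldsymbol\mu$ are strongly cospectral if $E_\lambda\mathbf u=\pm E_\lambda\boldsymbol\mu$ for every eigenvalue $\lambda$. *)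

theory Defs
  imports "HOL-Analysis.Analysis"
begin

definition simple_graph :: "('v::finite \<Rightarrow> 'v \<Rightarrow> bool) \<Rightarrow> bool" where
  "simple_graph E \<longleftrightarrow> (\<forall>x y. E x y \<longleftrightarrow> E y x) \<and> (\<forall>x. \<not> E x x)"

definition graph_aut :: "('v \<Rightarrow> 'v \<Rightarrow> bool) \<Rightarrow> ('v \<Rightarrow> 'v) \<Rightarrow> bool" where
  "graph_aut E \<sigma> \<longleftrightarrow> bij \<sigma> \<and> (\<forall>x y. E (\<sigma> x) (\<sigma> y) \<longleftrightarrow> E x y)"

definition degree :: "('v::finite \<Rightarrow> 'v \<Rightarrow> bool) \<Rightarrow> 'v \<Rightarrow> real" where
  "degree E x = real (card {y. E x y})"

definition adj_mat :: "('v::finite \<Rightarrow> 'v \<Rightarrow> bool) \<Rightarrow> real^'v^'v" where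
  "adj_mat E = (\<chi> i j. if E i j then 1 else 0)"

definition deg_mat :: "('v::finite \<Rightarrow> 'v \<Rightarrow> bool) \<Rightarrow> real^'v^'v" where
  "deg_mat E = (\<chi> i j. if i = j then degree E i else 0)"

definition lap_mat :: "('v::finite \<Rightarrow> 'v \<Rightarrow> bool) \<Rightarrow> real^'v^'v" where
  "lap_mat E = deg_mat E - adj_mat E"

definition slap_mat :: "('v::finite \<Rightarrow> 'v \<Rightarrow> bool) \<Rightarrow> real^'v^'v" where
  "slap_mat E = deg_mat E + adj_mat E"

definition evec :: "'v::finite \<Rightarrow> real^'v" where
  "evec a = (\<chi> j. if j = a then 1 else 0)"

definition pair_state :: "'v::finite \<Rightarrow> 'v \<Rightarrow> real \<Rightarrow> real^'v" where
  "pair_state a b s = evec a + s *\<^sub>R evec b"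

definition eig_space :: "real^'n^'n \<Rightarrow> real \<Rightarrow> (real^'n) set" where
  "eig_space M l = {x. M *v x = l *\<^sub>R x}"

definition is_eigenvalue :: "real^'n^'n \<Rightarrow> real \<Rightarrow> bool" where
  "is_eigenvalue M l \<longleftrightarrow> (\<exists>x. x \<noteq> 0 \<and> M *v x = l *\<^sub>R x)"

definition eig_proj :: "real^'n^'n \<Rightarrow> real \<Rightarrow> real^'n \<Rightarrow> real^'n" where
  "eig_proj M l u = (THE p. p \<in> eig_space M l \<and> (\<forall>w \<in> eig_space M l. (u - p) \<bullet> w = 0))"

definition strongly_cospectral :: "real^'n^'n \<Rightarrow> real^'n \<Rightarrow> real^'n \<Rightarrow> bool" where
  "strongly_cospectral M u v \<longleftrightarrow>
     (\<forall>l. is_eigenvalue M l \<longrightarrow> eig_proj M l u = eig_proj M l v \<or> eig_proj M l u = - eig_proj M l v)"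

end

theory Submission imports Defs begin

definition permv :: "('v::finite \<Rightarrow> 'v) \<Rightarrow> real^'v \<Rightarrow> real^'v" where
  "permv \<sigma> x = (\<chi> i. x $ (\<sigma> i))"

lemma eig_subspace: "subspace (eig_space M l)"
  unfolding subspace_def eig_space_def
  by (auto simp: matrix_vector_right_distrib matrix_vector_mult_scaleR scaleR_right_distrib)

lemma eig_proj_prop:
  "eig_proj M l u \<in> eig_space M l \<and> (\<forall>w \<in> eig_space M l. (u - eig_proj M l u) \<bullet> w = 0)"
proof -
  obtain y z where y: "y \<in> span (eig_space M l)" and z: "\<And>w. w \<in> span (eig_space M l) \<Longrightarrow> orthogonal z w"
    and u: "u = y + z" using orthogonal_subspace_decomp_exists by blast
  have sp: "span (eig_space M l) = eig_space M l" using eig_subspace span_eq_iff by blast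
  have ex: "\<exists>!p. p \<in> eig_space M l \<and> (\<forall>w \<in> eig_space M l. (u - p) \<bullet> w = 0)"
  proof (rule ex1I[of _ y])
    show "y \<in> eig_space M l \<and> (\<forall>w \<in> eig_space M l. (u - y) \<bullet> w = 0)"
      using y z u sp by (auto simp: orthogonal_def)
  next
    fix p assume p: "p \<in> eig_space M l \<and> (\<forall>w \<in> eig_space M l. (u - p) \<bullet> w = 0)"
    have "y - p \<in> eig_space M l" using p y sp eig_subspace subspace_diff by blast
    then have "(u - p) \<bullet> (y - p) = 0" "(u - y) \<bullet> (y - p) = 0" using p z u sp
      by (auto simp: orthogonal_def)
    then have "(y - p) \<bullet> (y - p) = 0" by (simp add: inner_diff_left)
    then show "p = y" by simp
  qed
  show ?thesis unfolding eig_proj_def using theI'[OF ex] by blast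
qed

lemma eig_proj_unique:
  assumes "p \<in> eig_space M l" "\<forall>w \<in> eig_space M l. (u - p) \<bullet> w = 0"
  shows "eig_proj M l u = p"
proof -
  have q: "eig_proj M l u \<in> eig_space M l" "\<forall>w \<in> eig_space M l. (u - eig_proj M l u) \<bullet> w = 0"
    using eig_proj_prop by auto
  have "eig_proj M l u - p \<in> eig_space M l" using assms q eig_subspace subspace_diff by blast
  then have "(u - p) \<bullet> (eig_proj M l u - p) = 0" "(u - eig_proj M l u) \<bullet> (eig_proj M l u - p) = 0"
    using assms q by auto
  then have "(eig_proj M l u - p) \<bullet> (eig_proj M l u - p) = 0" by (simp add: inner_diff_left)
  then show ?thesis by simp
qed

lemma permv_comm:
  assumes "bij \<sigma>" "\<And>i j. M$(\<sigma> i)$(\<sigma> j) = M$i$j"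
  shows "M *v permv \<sigma> x = permv \<sigma> (M *v x)"
proof -
  have "(\<Sum>j\<in>UNIV. M$(\<sigma> i)$j * x$j) = (\<Sum>j\<in>UNIV. M$i$j * x$(\<sigma> j))" for i
  proof -
    have "(\<Sum>j\<in>UNIV. M$(\<sigma> i)$j * x$j) = (\<Sum>j\<in>UNIV. M$(\<sigma> i)$(\<sigma> j) * x$(\<sigma> j))"
      using sum.reindex[of \<sigma> UNIV "\<lambda>j. M$(\<sigma> i)$j * x$j"] assms(1)
      by (simp add: bij_def)
    then show ?thesis using assms(2) by simp
  qed
  then show ?thesis by (simp add: vec_eq_iff permv_def matrix_vector_mult_def)
qed

lemma permv_inner: assumes "bij \<sigma>" shows "permv \<sigma> x \<bullet> permv \<sigma> y = x \<bullet> y"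
  using sum.reindex[of \<sigma> UNIV "\<lambda>i. x$i * y$i"] assms
  by (simp add: inner_vec_def permv_def bij_def)

lemma permv_comp: "permv \<sigma> (permv \<tau> x) = permv (\<tau> \<circ> \<sigma>) x"
  by (simp add: permv_def vec_eq_iff)

lemma permv_diff: "permv \<sigma> (x - y) = permv \<sigma> x - permv \<sigma> y"
  by (simp add: permv_def vec_eq_iff)

lemma permv_id: "permv id x = x" by (simp add: permv_def vec_eq_iff)

lemma proj_permv:
  assumes "bij \<sigma>" "\<And>i j. M$(\<sigma> i)$(\<sigma> j) = M$i$j" "\<And>i j. M$(inv \<sigma> i)$(inv \<sigma> j) = M$i$j"
  shows "eig_proj M l (permv \<sigma> x) = permv \<sigma> (eig_proj M l x)"
proof (rule eig_proj_unique)
  have p: "eig_proj M l x \<in> eig_space M l \<and> (\<forall>w \<in> eig_space M l. (x - eig_proj M l x) \<bullet> w = 0)"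
    by (rule eig_proj_prop)
  have bi: "bij (inv \<sigma>)" using assms(1) bij_imp_bij_inv by blast
  show "permv \<sigma> (eig_proj M l x) \<in> eig_space M l"
    using p permv_comm[OF assms(1,2)] by (simp add: eig_space_def permv_def vec_eq_iff)
  show "\<forall>w\<in>eig_space M l. (permv \<sigma> x - permv \<sigma> (eig_proj M l x)) \<bullet> w = 0"
  proof
    fix w assume w: "w \<in> eig_space M l"
    have w': "permv (inv \<sigma>) w \<in> eig_space M l"
      using w permv_comm[OF bi assms(3)] by (simp add: eig_space_def permv_def vec_eq_iff)
    have "w = permv \<sigma> (permv (inv \<sigma>) w)"
      using assms(1) by (simp add: permv_comp bij_is_inj permv_id)
    then have "(permv \<sigma> x - permv \<sigma> (eig_proj M l x)) \<bullet> w
        = permv \<sigma> (x - eig_proj M l x) \<bullet> permv \<sigma> (permv (inv \<sigma>) w)"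
      by (simp add: permv_diff)
    also have "\<dots> = (x - eig_proj M l x) \<bullet> permv (inv \<sigma>) w" by (rule permv_inner[OF assms(1)])
    also have "\<dots> = 0" using p w' by blast
    finally show "(permv \<sigma> x - permv \<sigma> (eig_proj M l x)) \<bullet> w = 0" .
  qed
qed

lemma sym_inner:
  assumes "\<And>i j. M$i$j = M$j$i"
  shows "(M *v x) \<bullet> y = x \<bullet> (M *v (y::real^'n))"
proof -
  have "(M *v x) \<bullet> y = (\<Sum>i\<in>UNIV. \<Sum>j\<in>UNIV. M$i$j * x$j * y$i)"
    by (simp add: inner_vec_def matrix_vector_mult_def sum_distrib_right)
  also have "\<dots> = (\<Sum>j\<in>UNIV. \<Sum>i\<in>UNIV. M$i$j * x$j * y$i)" by (rule sum.swap)
  also have "\<dots> = x \<bullet> (M *v y)"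
    using assms by (simp add: inner_vec_def matrix_vector_mult_def sum_distrib_left mult_ac)
  finally show ?thesis .
qed

lemma quad_lemma:
  fixes c d :: real
  assumes "\<And>t. 2 * t * c + t^2 * d \<le> 0"
  shows "c = 0"
proof -
  define e where "e = \<bar>d\<bar> + 1"
  have pos: "e > 0" unfolding e_def by simp
  define t where "t = c / e"
  have "2 * t * c + t^2 * d \<le> 0" by (rule assms)
  then have "(2 * t * c + t^2 * d) * e^2 \<le> 0"
    by (simp add: mult_nonpos_nonneg)
  moreover have "(2 * t * c + t^2 * d) * e^2 = c^2 * (2 * e + d)"
    unfolding t_def using pos by (simp add: field_simps power2_eq_square)
  ultimately have "c^2 * (2 * e + d) \<le> 0" by simp
  moreover have "2 * e + d > 0" unfolding e_def by (simp add: abs_if)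
  ultimately have "c^2 \<le> 0" by (simp add: mult_le_0_iff)
  then show ?thesis by simp
qed

lemma spectral_zero:
  assumes sym: "\<And>i j. M$i$j = M$j$i"
    and z: "\<And>l w. w \<in> eig_space M l \<Longrightarrow> z \<bullet> w = 0"
  shows "z = (0::real^'n)"
proof (rule ccontr)
  assume nz: "z \<noteq> 0"
  define S where "S = {x::real^'n. \<forall>l. \<forall>w\<in>eig_space M l. x \<bullet> w = 0}"
  have subS: "subspace S" unfolding subspace_def S_def
    by (auto simp: inner_add_left)
  have clS: "closed S" using subS closed_subspace by blast
  have zS: "z \<in> S" using z S_def by auto
  have MS: "M *v x \<in> S" if "x \<in> S" for x
  proof -
    have "(M *v x) \<bullet> w = 0" if "w \<in> eig_space M l" for l w
    proof -
      have "(M *v x) \<bullet> w = x \<bullet> (M *v w)" by (rule sym_inner[OF sym])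
      also have "\<dots> = l * (x \<bullet> w)" using that by (simp add: eig_space_def)
      also have "\<dots> = 0" using \<open>x \<in> S\<close> that S_def by simp
      finally show ?thesis .
    qed
    then show ?thesis unfolding S_def by auto
  qed
  define f where "f x = x \<bullet> (M *v x)" for x :: "real^'n"
  define K where "K = S \<inter> sphere 0 1"
  have cK: "compact K" unfolding K_def using clS compact_sphere closed_Int_compact by blast
  have "(1 / norm z) *\<^sub>R z \<in> K" using nz zS subS unfolding K_def
    by (simp add: subspace_scale)
  then have neK: "K \<noteq> {}" by blast
  have cf: "continuous_on K f" unfolding f_def
    by (intro continuous_intros linear_continuous_on matrix_vector_mul_linear)
  obtain x0 where x0K: "x0 \<in> K" and x0max: "\<And>x. x \<in> K \<Longrightarrow> f x \<le> f x0"
    using continuous_attains_sup[OF cK neK cf] by blast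
  have x0S: "x0 \<in> S" and nx0: "norm x0 = 1" using x0K K_def by auto
  have x0x0: "x0 \<bullet> x0 = 1" using nx0 by (simp add: dot_square_norm)
  have key: "y \<bullet> (M *v x0) = 0" if yS: "y \<in> S" and yo: "y \<bullet> x0 = 0" for y
  proof (rule quad_lemma[where d = "f y - f x0 * (y \<bullet> y)"])
    fix t :: real
    define xt where "xt = x0 + t *\<^sub>R y"
    have xtS: "xt \<in> S" unfolding xt_def using x0S yS subS
      by (simp add: subspace_add subspace_scale)
    have nxt: "xt \<bullet> xt = 1 + t^2 * (y \<bullet> y)"
      unfolding xt_def using x0x0 yo
      by (simp add: inner_add_left inner_add_right inner_commute power2_eq_square)
    then have nxtpos: "xt \<bullet> xt > 0"
      by (metis add_pos_nonneg inner_ge_zero mult_nonneg_nonneg zero_le_power2 zero_less_one)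
    have nrm: "norm xt = sqrt (xt \<bullet> xt)" by (simp add: norm_eq_sqrt_inner)
    have "(1 / norm xt) *\<^sub>R xt \<in> K" unfolding K_def using xtS subS nxtpos
      by (simp add: subspace_scale)
    then have "f ((1 / norm xt) *\<^sub>R xt) \<le> f x0" by (rule x0max)
    moreover have "f ((1 / norm xt) *\<^sub>R xt) = f xt / (xt \<bullet> xt)"
      unfolding f_def using nxtpos
      by (simp add: matrix_vector_mult_scaleR dot_square_norm power2_eq_square divide_simps)
    ultimately have "f xt \<le> f x0 * (xt \<bullet> xt)" using nxtpos by (simp add: divide_simps)
    moreover have "f xt = f x0 + 2 * t * (y \<bullet> (M *v x0)) + t^2 * f y"
    proof -
      have s: "x0 \<bullet> (M *v y) = y \<bullet> (M *v x0)"
        using sym_inner[OF sym, of y x0] by (simp add: inner_commute)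
      show ?thesis unfolding f_def xt_def
        by (simp add: matrix_vector_right_distrib matrix_vector_mult_scaleR inner_add_left
            inner_add_right s power2_eq_square algebra_simps)
    qed
    ultimately show "2 * t * (y \<bullet> (M *v x0)) + t^2 * (f y - f x0 * (y \<bullet> y)) \<le> 0"
      using nxt by (simp add: algebra_simps)
  qed
  define y where "y = M *v x0 - f x0 *\<^sub>R x0"
  have yS: "y \<in> S" unfolding y_def using MS x0S subS by (simp add: subspace_diff subspace_scale)
  have yo: "y \<bullet> x0 = 0"
  proof -
    have "y \<bullet> x0 = (M *v x0) \<bullet> x0 - f x0 * (x0 \<bullet> x0)" unfolding y_def
      by (simp add: inner_diff_left)
    also have "(M *v x0) \<bullet> x0 = f x0" unfolding f_def by (rule inner_commute)
    finally show ?thesis using x0x0 by simp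
  qed
  have "y \<bullet> y = y \<bullet> (M *v x0) - f x0 * (y \<bullet> x0)" unfolding y_def
    by (simp add: inner_diff_right)
  then have "y \<bullet> y = 0" using key[OF yS yo] yo by simp
  then have "M *v x0 = f x0 *\<^sub>R x0" unfolding y_def by simp
  then have "x0 \<in> eig_space M (f x0)" by (simp add: eig_space_def)
  then have "x0 \<bullet> x0 = 0" using x0S S_def by blast
  then show False using x0x0 by simp
qed

lemma aut_inv: assumes "graph_aut E \<sigma>" shows "graph_aut E (inv \<sigma>)"
proof -
  have b: "bij \<sigma>" using assms graph_aut_def by blast
  have "E (inv \<sigma> x) (inv \<sigma> y) \<longleftrightarrow> E x y" for x y
    using assms unfolding graph_aut_def
    by (metis b bij_inv_eq_iff)
  then show ?thesis using b bij_imp_bij_inv graph_aut_def by blast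
qed

lemma degree_aut: assumes "graph_aut E \<sigma>" shows "degree E (\<sigma> x) = degree E x"
proof -
  have b: "bij \<sigma>" using assms graph_aut_def by blast
  have "{y. E (\<sigma> x) y} = \<sigma> ` {y. E x y}"
  proof safe
    fix y assume "E (\<sigma> x) y"
    moreover obtain z where "y = \<sigma> z" using b by (metis bij_pointE)
    ultimately show "y \<in> \<sigma> ` {y. E x y}" using assms unfolding graph_aut_def by auto
  next
    fix z assume "E x z" then show "E (\<sigma> x) (\<sigma> z)" using assms unfolding graph_aut_def by auto
  qed
  then show ?thesis unfolding degree_def using b
    by (metis bij_is_inj card_image inj_on_subset subset_UNIV)
qed

lemma M_aut:
  assumes "M \<in> {adj_mat E, lap_mat E, slap_mat E}" "graph_aut E \<sigma>"
  shows "M$(\<sigma> i)$(\<sigma> j) = M$i$j"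
proof -
  have b: "bij \<sigma>" using assms graph_aut_def by blast
  have A: "adj_mat E $(\<sigma> i)$(\<sigma> j) = adj_mat E $i$j"
    using assms(2) by (simp add: adj_mat_def graph_aut_def)
  have D: "deg_mat E $(\<sigma> i)$(\<sigma> j) = deg_mat E $i$j"
    using degree_aut[OF assms(2)] b by (simp add: deg_mat_def bij_is_inj inj_eq)
  show ?thesis using assms(1) A D by (auto simp: lap_mat_def slap_mat_def)
qed

lemma M_sym:
  assumes "simple_graph E" "M \<in> {adj_mat E, lap_mat E, slap_mat E}"
  shows "M$i$j = M$j$i"
proof -
  have A: "adj_mat E $i$j = adj_mat E $j$i"
    using assms(1) by (simp add: adj_mat_def simple_graph_def)
  have D: "deg_mat E $i$j = deg_mat E $j$i" by (simp add: deg_mat_def)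
  show ?thesis using assms(2) A D by (auto simp: lap_mat_def slap_mat_def)
qed

lemma fix_transfer:
  assumes "simple_graph E" "M \<in> {adj_mat E, lap_mat E, slap_mat E}" "graph_aut E \<sigma>"
    and sc: "strongly_cospectral M u v" and fu: "permv \<sigma> u = u"
  shows "permv \<sigma> v = v"
proof -
  have b: "bij \<sigma>" using assms graph_aut_def by blast
  have m1: "\<And>i j. M$(\<sigma> i)$(\<sigma> j) = M$i$j" using M_aut assms by blast
  have m2: "\<And>i j. M$(inv \<sigma> i)$(inv \<sigma> j) = M$i$j" using M_aut assms aut_inv by blast
  have PE: "\<And>l x. eig_proj M l (permv \<sigma> x) = permv \<sigma> (eig_proj M l x)"
    using proj_permv[OF b m1 m2] by blast
  have "(permv \<sigma> v - v) \<bullet> w = 0" if w: "w \<in> eig_space M l" for l w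
  proof (cases "is_eigenvalue M l")
    case False
    then have "w = 0" using w by (auto simp: is_eigenvalue_def eig_space_def)
    then show ?thesis by simp
  next
    case True
    have eq: "eig_proj M l (permv \<sigma> v) = eig_proj M l v"
    proof -
      have "eig_proj M l u = eig_proj M l v \<or> eig_proj M l u = - eig_proj M l v"
        using sc True strongly_cospectral_def by blast
      moreover have "permv \<sigma> (- x) = - permv \<sigma> x" for x by (simp add: permv_def vec_eq_iff)
      moreover have "permv \<sigma> (eig_proj M l u) = eig_proj M l u" using PE fu by metis
      ultimately show ?thesis using PE by (metis minus_minus)
    qed
    have p1: "(permv \<sigma> v - eig_proj M l (permv \<sigma> v)) \<bullet> w = 0" using eig_proj_prop w by blast
    have p2: "(v - eig_proj M l v) \<bullet> w = 0" using eig_proj_prop w by blast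
    have "(permv \<sigma> v - v) \<bullet> w = (permv \<sigma> v - eig_proj M l (permv \<sigma> v)) \<bullet> w - (v - eig_proj M l v) \<bullet> w"
      using eq by (simp add: inner_diff_left)
    then show ?thesis using p1 p2 by simp
  qed
  then have "permv \<sigma> v - v = 0" using spectral_zero[of M] M_sym[OF assms(1,2)] by blast
  then show ?thesis by simp
qed

lemma permv_pair: "permv \<sigma> (pair_state a b s) $ i = (if \<sigma> i = a then 1 else 0) + s * (if \<sigma> i = b then 1 else 0)"
  by (simp add: permv_def pair_state_def evec_def)

lemma pair_comp: "pair_state a b s $ i = (if i = a then 1 else 0) + s * (if i = b then 1 else 0)"
  by (simp add: pair_state_def evec_def)

theorem mainTheorem5:
  fixes E :: "'v::finite \<Rightarrow> 'v \<Rightarrow> bool" and M :: "real^'v^'v"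
    and a b \<alpha> \<beta> :: 'v and s :: real
  assumes "simple_graph E"
    and "M \<in> {adj_mat E, lap_mat E, slap_mat E}"
    and "s \<noteq> 0" and "a \<noteq> b" and "\<alpha> \<noteq> \<beta>"
    and "strongly_cospectral M (pair_state a b s) (pair_state \<alpha> \<beta> s)"
  shows "(s \<noteq> 1 \<longrightarrow> (\<forall>\<sigma>. graph_aut E \<sigma> \<and> \<sigma> a = a \<and> \<sigma> b = b \<longrightarrow> \<sigma> \<alpha> = \<alpha> \<and> \<sigma> \<beta> = \<beta>))
       \<and> (s = 1 \<longrightarrow> (\<forall>\<sigma>. graph_aut E \<sigma> \<and> \<sigma> ` {a, b} = {a, b} \<longrightarrow> \<sigma> ` {\<alpha>, \<beta>} = {\<alpha>, \<beta>}))"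
proof (rule conjI; intro impI allI)
  fix \<sigma> assume s1: "s \<noteq> 1" and h: "graph_aut E \<sigma> \<and> \<sigma> a = a \<and> \<sigma> b = b"
  have b: "bij \<sigma>" using h graph_aut_def by blast
  then have inj: "\<And>x y. \<sigma> x = \<sigma> y \<longleftrightarrow> x = y" by (simp add: bij_is_inj inj_eq)
  have "permv \<sigma> (pair_state a b s) = pair_state a b s"
  proof -
    have "\<sigma> i = a \<longleftrightarrow> i = a" "\<sigma> i = b \<longleftrightarrow> i = b" for i using inj[of i a] inj[of i b] h by auto
    then show ?thesis by (simp add: vec_eq_iff permv_pair pair_comp)
  qed
  then have fx: "permv \<sigma> (pair_state \<alpha> \<beta> s) = pair_state \<alpha> \<beta> s"
    using fix_transfer assms(1,2,6) h by blast
  have c1: "(if \<sigma> \<alpha> = \<alpha> then 1 else 0) + s * (if \<sigma> \<alpha> = \<beta> then 1 else 0) = (1::real)"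
    using arg_cong[OF fx, of "\<lambda>x. x $ \<alpha>"] assms(5) unfolding permv_pair pair_comp by simp
  have fa: "\<sigma> \<alpha> = \<alpha>" using c1 s1 by (auto split: if_splits)
  have c2: "(if \<sigma> \<beta> = \<alpha> then 1 else 0) + s * (if \<sigma> \<beta> = \<beta> then 1 else 0) = s"
    using arg_cong[OF fx, of "\<lambda>x. x $ \<beta>"] assms(5) unfolding permv_pair pair_comp by simp
  have "\<sigma> \<beta> \<noteq> \<alpha>" using fa inj assms(5) by metis
  then have fb: "\<sigma> \<beta> = \<beta>" using c2 assms(3) by (auto split: if_splits)
  show "\<sigma> \<alpha> = \<alpha> \<and> \<sigma> \<beta> = \<beta>" using fa fb by simp
next
  fix \<sigma> assume s1: "s = 1" and h: "graph_aut E \<sigma> \<and> \<sigma> ` {a, b} = {a, b}"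
  have b: "bij \<sigma>" using h graph_aut_def by blast
  then have inj: "\<And>x y. \<sigma> x = \<sigma> y \<longleftrightarrow> x = y" by (simp add: bij_is_inj inj_eq)
  have iff: "\<sigma> i \<in> {a, b} \<longleftrightarrow> i \<in> {a, b}" for i
  proof -
    have "\<sigma> i \<in> \<sigma> ` {a,b} \<longleftrightarrow> i \<in> {a,b}" using inj by auto
    moreover have "\<sigma> ` {a,b} = {a,b}" using h by blast
    ultimately show ?thesis by (metis insert_iff singletonD)
  qed
  have "permv \<sigma> (pair_state a b s) = pair_state a b s"
    unfolding vec_eq_iff permv_pair pair_comp s1
  proof
    fix i show "(if \<sigma> i = a then 1 else 0) + 1 * (if \<sigma> i = b then 1 else 0) =
          (if i = a then 1 else 0) + 1 * (if i = b then (1::real) else 0)"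
      using iff[of i] assms(4) by auto
  qed
  then have fx: "permv \<sigma> (pair_state \<alpha> \<beta> s) = pair_state \<alpha> \<beta> s"
    using fix_transfer assms(1,2,6) h by blast
  have iff2: "\<sigma> i \<in> {\<alpha>, \<beta>} \<longleftrightarrow> i \<in> {\<alpha>, \<beta>}" for i
  proof -
    have "(if \<sigma> i = \<alpha> then 1 else 0) + (if \<sigma> i = \<beta> then 1 else 0) =
          (if i = \<alpha> then 1 else 0) + (if i = \<beta> then (1::real) else 0)"
      using arg_cong[OF fx, of "\<lambda>x. x $ i"] unfolding permv_pair pair_comp s1 by simp
    then show ?thesis using assms(5) by (auto split: if_splits)
  qed
  show "\<sigma> ` {\<alpha>, \<beta>} = {\<alpha>, \<beta>}"
  proof
    show "\<sigma> ` {\<alpha>, \<beta>} \<subseteq> {\<alpha>, \<beta>}" using iff2 by blast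
    show "{\<alpha>, \<beta>} \<subseteq> \<sigma> ` {\<alpha>, \<beta>}"
    proof
      fix x assume x: "x \<in> {\<alpha>, \<beta>}"
      obtain y where "x = \<sigma> y" using b by (metis bij_pointE)
      then show "x \<in> \<sigma> ` {\<alpha>, \<beta>}" using iff2[of y] x by blast
    qed
  qed
qed

end
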